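(* Let $t \in \mathbb{N}_0$ and $b \in \mathbb{N}$ be such that $\Phi_b(x)$ divides the polynomial $T_t(x)$ below. Then $b/\mathrm{rad}(b) < 13$, where \begin{align*} T_t(x) = {}& x^{8t+27} + x^{8t+26} + x^{8t+25} + x^{8t+22} + x^{8t+20} + x^{8t+18} + x^{8t+17} - x^{8t+16} - x^{8t+15} + 2x^{6t+15} \\ & - x^{4t+26} - x^{4t+25} + x^{4t+23} - x^{4t+21} - x^{4t+20} + x^{4t+19} - x^{4t+18} - x^{4t+17} + 3x^{4t+14} - 3x^{4t+13} \\ & + x^{4t+10} + x^{4t+9} - x^{4t+8} + x^{4t+7} + x^{4t+6} - x^{4t+4} + x^{4t+2} + x^{4t+1} - 2x^{2t+12} \\ & + x^{12} + x^{11} - x^{10} - x^9 - x^7 - x^5 - x^2 - x - 1. \end{align*}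
   Context: $\Phi_b(x)$ is the $b$-th cyclotomic polynomial (the monic polynomial whose roots are exactly the primitive $b$-th roots of unity, each simple). $\mathrm{rad}(b)$ denotes the product of the distinct prime divisors of $b$ (the largest square-free divisor of $b$). *)

theory Defs
  imports "HOL-Analysis.Analysis" "HOL-Computational_Algebra.Computational_Algebra"
begin

definition cyclotomic :: "nat \<Rightarrow> complex poly" where
  "cyclotomic b = (\<Prod>k\<in>{k. k < b \<and> coprime k b}.
      [:- cis (2 * pi * real k / real b), 1:])"

definition rad :: "nat \<Rightarrow> nat" where
  "rad b = (\<Prod>p\<in>prime_factors b. p)"

definition T_poly :: "nat \<Rightarrow> complex poly" where
  "T_poly t =
      monom 1 (8*t+27) + monom 1 (8*t+26) + monom 1 (8*t+25) + monom 1 (8*t+22)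
    + monom 1 (8*t+20) + monom 1 (8*t+18) + monom 1 (8*t+17) - monom 1 (8*t+16)
    - monom 1 (8*t+15) + monom 2 (6*t+15)
    - monom 1 (4*t+26) - monom 1 (4*t+25) + monom 1 (4*t+23) - monom 1 (4*t+21)
    - monom 1 (4*t+20) + monom 1 (4*t+19) - monom 1 (4*t+18) - monom 1 (4*t+17)
    + monom 3 (4*t+14) - monom 3 (4*t+13)
    + monom 1 (4*t+10) + monom 1 (4*t+9) - monom 1 (4*t+8) + monom 1 (4*t+7)
    + monom 1 (4*t+6) - monom 1 (4*t+4) + monom 1 (4*t+2) + monom 1 (4*t+1)
    - monom 2 (2*t+12)
    + monom 1 12 + monom 1 11 - monom 1 10 - monom 1 9 - monom 1 7 - monom 1 5
    - monom 1 2 - monom 1 1 - 1"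

end

theory Submission
  imports Defs "HOL-Library.Real_Mod"
begin


definition LL :: "(int \<times> nat \<times> nat) list" where
"LL = [(1,8,27), (1,8,26), (1,8,25), (1,8,22), (1,8,20), (1,8,18), (1,8,17), (-1,8,16), (-1,8,15), (2,6,15), (-1,4,26), (-1,4,25), (1,4,23), (-1,4,21), (-1,4,20), (1,4,19), (-1,4,18), (-1,4,17), (3,4,14), (-3,4,13), (1,4,10), (1,4,9), (-1,4,8), (1,4,7), (1,4,6), (-1,4,4), (1,4,2), (1,4,1), (-2,2,12), (1,0,12), (1,0,11), (-1,0,10), (-1,0,9), (-1,0,7), (-1,0,5), (-1,0,2), (-1,0,1), (-1,0,0)]"

definition cf :: "nat \<Rightarrow> int" where "cf j = fst (LL!j)"
definition Ae :: "nat \<Rightarrow> nat" where "Ae j = fst (snd (LL!j))"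
definition De :: "nat \<Rightarrow> nat" where "De j = snd (snd (LL!j))"
definition ex :: "nat \<Rightarrow> nat \<Rightarrow> nat" where "ex t j = Ae j * t + De j"

lemma length_LL: "length LL = 38" by (simp add: LL_def)

lemma poly_T_list: "poly (T_poly t) z = sum_list (map (\<lambda>(c,A,D). of_int c * z ^ (A*t+D)) LL)"
  by (simp add: T_poly_def LL_def poly_monom algebra_simps)

lemma poly_T: "poly (T_poly t) z = (\<Sum>j<38. of_int (cf j) * z ^ ex t j)"
proof -
  have "sum_list (map (\<lambda>(c,A,D). of_int c * z ^ (A*t+D)) LL) = (\<Sum>j<length LL. (\<lambda>(c,A,D). of_int c * z ^ (A*t+D)) (LL!j))"
    by (simp add: sum_list_sum_nth atLeast0LessThan)
  also have "\<dots> = (\<Sum>j<38. of_int (cf j) * z ^ ex t j)"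
    by (simp add: length_LL cf_def ex_def Ae_def De_def split_beta)
  finally show ?thesis by (simp add: poly_T_list)
qed

lemma rad_pos: "b \<ge> 1 \<Longrightarrow> rad b > 0"
  by (auto simp: rad_def intro!: prod_pos dest: in_prime_factors_imp_prime prime_gt_0_nat)

lemma rad_dvd: assumes "b \<ge> 1" shows "rad b dvd b"
proof -
  have "rad b dvd (\<Prod>p \<in> prime_factors b. p ^ multiplicity p b)"
    unfolding rad_def
    by (rule prod_dvd_prod) (auto simp: prime_factors_multiplicity)
  also have "\<dots> = b" using assms by (subst prod_prime_factors) auto
  finally show ?thesis .
qed

lemma prime_dvd_rad: assumes "b \<ge> 1" "prime p" "p dvd b" shows "p dvd rad b"
proof -
  have "p \<in> prime_factors b" using assms by (auto simp: prime_factors_dvd)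
  then show ?thesis unfolding rad_def using dvd_prodI[of "prime_factors b" p "\<lambda>x. x"] by simp
qed

lemma cis_period: "cis (x + 2*pi*real q) = cis x"
  by (simp add: cis_mult[symmetric])

lemma cyc_root: assumes "b > 0" "coprime k b"
  shows "poly (cyclotomic b) (cis (2*pi*real k/real b)) = 0"
proof -
  define k' where "k' = k mod b"
  have k'b: "k' < b" using assms by (simp add: k'_def)
  have cop: "coprime k' b" using assms by (simp add: k'_def)
  have "real k = real k' + real b * real (k div b)"
    unfolding k'_def by (metis div_mult_mod_eq of_nat_add of_nat_mult add.commute mult.commute)
  then have "2*pi*real k/real b = 2*pi*real k'/real b + 2*pi*real (k div b)"
    using assms by (simp add: field_simps)
  then have eq: "cis (2*pi*real k/real b) = cis (2*pi*real k'/real b)"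
    by (simp add: cis_period)
  have mem: "k' \<in> {k. k < b \<and> coprime k b}" using k'b cop by simp
  have "poly [:- cis (2 * pi * real k' / real b), 1:] (cis (2*pi*real k'/real b)) = 0" by simp
  then show ?thesis unfolding eq cyclotomic_def poly_prod
    using mem by (intro prod_zero) auto
qed

lemma cis_eq1_dvd: assumes "b > 0" "cis (2*pi*real m/real b) = 1" shows "b dvd m"
proof -
  obtain q where q: "2*pi*real m/real b = of_int q * (2*pi)" using assms(2) cis_eq_1_iff by blast
  then have "real m = of_int q * real b" using assms(1) by (simp add: field_simps)
  then have "int m = q * int b" by (metis of_int_eq_iff of_int_mult of_int_of_nat_eq)
  then have "int b dvd int m" by simp
  then show ?thesis by simp
qed

lemma sum_roots: assumes "n > 0"
  shows "(\<Sum>k<n. cis (2*pi/real n) ^ (k*m)) = (if n dvd m then of_nat n else 0)"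
proof (cases "n dvd m")
  case True
  then obtain q where "m = n*q" by auto
  have "cis (2*pi/real n) ^ (k*m) = 1" for k
  proof -
    have "real (k*m) * (2*pi/real n) = 2*pi*real(k*q)" using assms \<open>m = n*q\<close> by (simp add: field_simps)
    note eq = this
    show ?thesis by (simp only: Complex.DeMoivre eq) simp
  qed
  then show ?thesis using True by simp
next
  case False
  define w where "w = cis (2*pi/real n) ^ m"
  have w: "w = cis (2*pi*real m/real n)" unfolding w_def by (simp add: Complex.DeMoivre field_simps)
  have "w \<noteq> 1" using False cis_eq1_dvd[OF assms] w by auto
  have eqn: "real n * (2*pi*real m/real n) = 2*pi*real m" using assms by simp
  have wn: "w ^ n = 1" unfolding w by (simp only: Complex.DeMoivre eqn) simp
  have "(\<Sum>k<n. cis (2*pi/real n) ^ (k*m)) = (\<Sum>k<n. w ^ k)"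
    unfolding w_def by (intro sum.cong refl) (simp add: power_mult[symmetric] mult.commute)
  also have "\<dots> = 0" using geometric_sum[OF \<open>w \<noteq> 1\<close>, of n] wn by simp
  finally show ?thesis using False by simp
qed

lemma dvd_shift: assumes "r < (n::nat)" shows "(n dvd e + n - r) = (e mod n = r)"
proof -
  have n0: "n > 0" using assms by simp
  define m where "m = e mod n"
  have e: "e = n * (e div n) + m" unfolding m_def by simp
  have mn: "m < n" unfolding m_def using n0 by simp
  have "e + n - r = n * (e div n) + (m + n - r)" using e assms by simp
  then have "(n dvd e + n - r) = (n dvd m + n - r)" by (simp add: dvd_add_right_iff)
  also have "\<dots> = (m + n - r = n)"
  proof
    assume "n dvd m + n - r"
    then obtain c where c: "m + n - r = n * c" by auto
    have "0 < m + n - r" "m + n - r < 2*n" using assms mn by auto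
    then have "n*c < n*2" "0 < n*c" using c by (auto simp: mult.commute)
    then have "c < 2" "0 < c" using mult_less_cancel1 by auto
    then have "c = 1" by simp
    then show "m + n - r = n" using c by simp
  qed simp
  also have "\<dots> = (m = r)" using assms by auto
  finally show ?thesis unfolding m_def .
qed

lemma cop_shift: assumes "b \<ge> 1" shows "coprime (1 + k * rad b) b"
proof (rule ccontr)
  assume "\<not> coprime (1 + k * rad b) b"
  then obtain c where c: "c dvd 1 + k * rad b" "c dvd b" "\<not> is_unit c" by (rule not_coprimeE)
  then have "c \<noteq> 1" by auto
  then obtain p where p: "prime p" "p dvd c" using prime_factor_nat by blast
  have "p dvd b" using p c dvd_trans by blast
  then have "p dvd rad b" using prime_dvd_rad assms p by blast
  then have "p dvd k * rad b" by simp
  moreover have "p dvd 1 + k * rad b" using p c dvd_trans by blast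
  ultimately have "p dvd 1" by (metis dvd_add_right_iff add.commute)
  then show False using p by simp
qed

lemma class_zero:
  assumes b1: "b \<ge> 1" and dv: "cyclotomic b dvd T_poly t" and nd: "n = b div rad b" and rn: "r < n"
  shows "(\<Sum>j\<in>{j. j<38 \<and> ex t j mod n = r}. of_int (cf j) * cis(2*pi/real b)^ex t j) = 0"
proof -
  define z where "z = cis(2*pi/real b)"
  define w where "w = cis(2*pi/real n)"
  have rb: "rad b > 0" using rad_pos b1 by simp
  have bn: "b = n * rad b" using rad_dvd[OF b1] nd by simp
  have n0: "n > 0" using rn by simp
  have rbr: "real b = real n * real (rad b)" using bn by (metis of_nat_mult)
  have root: "poly (T_poly t) (z * w^k) = 0" for k
  proof -
    have "z * w^k = cis (2*pi/real b + real k * (2*pi/real n))"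
      unfolding z_def w_def by (simp add: Complex.DeMoivre cis_mult)
    also have "2*pi/real b + real k * (2*pi/real n) = 2*pi*real (1 + k * rad b)/real b"
      using rbr n0 rb by (simp add: field_simps)
    finally have eq: "z * w^k = cis (2*pi*real (1 + k * rad b)/real b)" .
    have "poly (cyclotomic b) (z * w^k) = 0" unfolding eq
      using cyc_root[of b "1 + k * rad b"] cop_shift[OF b1] b1 by simp
    moreover obtain q where "T_poly t = cyclotomic b * q" using dv by (auto elim: dvdE)
    ultimately show ?thesis by simp
  qed
  define C where "C = {j. j<38 \<and> ex t j mod n = r}"
  have "0 = (\<Sum>k<n. w^(k*(n-r)) * poly (T_poly t) (z * w^k))" using root by simp
  also have "\<dots> = (\<Sum>k<n. \<Sum>j<38. of_int (cf j) * z ^ ex t j * w^(k*(ex t j + n - r)))"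
  proof (intro sum.cong refl)
    fix k
    have "w^(k*(n-r)) * poly (T_poly t) (z * w^k) = (\<Sum>j<38. w^(k*(n-r)) * (of_int (cf j) * (z * w^k) ^ ex t j))"
      by (simp add: poly_T sum_distrib_left)
    also have "\<dots> = (\<Sum>j<38. of_int (cf j) * z ^ ex t j * w^(k*(ex t j + n - r)))"
    proof (intro sum.cong refl)
      fix j
      have "ex t j + n - r = ex t j + (n - r)" using rn by simp
      then have "w^(k*(ex t j + n - r)) = w^(k*(n-r)) * (w^k)^(ex t j)"
        by (simp add: power_add power_mult algebra_simps)
      then show "w^(k*(n-r)) * (of_int (cf j) * (z * w^k) ^ ex t j) = of_int (cf j) * z ^ ex t j * w^(k*(ex t j + n - r))"
        by (simp add: power_mult_distrib)
    qed
    finally show "w^(k*(n-r)) * poly (T_poly t) (z * w^k) = (\<Sum>j<38. of_int (cf j) * z ^ ex t j * w^(k*(ex t j + n - r)))" .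
  qed
  also have "\<dots> = (\<Sum>j<38. of_int (cf j) * z ^ ex t j * (\<Sum>k<n. w^(k*(ex t j + n - r))))"
    by (subst sum.swap) (simp add: sum_distrib_left)
  also have "\<dots> = (\<Sum>j<38. if j \<in> C then of_nat n * (of_int (cf j) * z ^ ex t j) else 0)"
    unfolding w_def using n0 by (intro sum.cong refl) (simp add: sum_roots dvd_shift[OF rn] C_def)
  also have "\<dots> = of_nat n * (\<Sum>j\<in>C. of_int (cf j) * z ^ ex t j)"
    by (simp add: sum.If_cases C_def sum_distrib_left Int_def)
  finally have "of_nat n * (\<Sum>j\<in>C. of_int (cf j) * z ^ ex t j) = 0" by simp
  then show ?thesis using n0 unfolding C_def z_def by simp
qed



definition LLi :: "(nat \<times> int \<times> nat \<times> nat) list" where "LLi = zip [0..<38] LL"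

lemma LLi_map: "LLi = map (\<lambda>j. (j, LL!j)) [0..<38]"
  unfolding LLi_def by (rule nth_equalityI) (auto simp: length_LL)

lemma mem_LLi: "j < 38 \<Longrightarrow> (j, cf j, Ae j, De j) \<in> set LLi"
  unfolding LLi_map cf_def Ae_def De_def by auto

lemma resid: "(ex t j mod n = ex t w mod n) =
   (int n dvd (int (Ae j) - int (Ae w)) * int t + (int (De j) - int (De w)))"
proof -
  have "(ex t j mod n = ex t w mod n) = (int (ex t j) mod int n = int (ex t w) mod int n)"
    by (metis of_nat_eq_iff zmod_int)
  also have "\<dots> = (int n dvd int (ex t j) - int (ex t w))" by (rule mod_eq_dvd_iff)
  also have "int (ex t j) - int (ex t w) = (int (Ae j) - int (Ae w)) * int t + (int (De j) - int (De w))"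
    by (simp add: ex_def algebra_simps)
  finally show ?thesis .
qed

lemma lin_comb:
  fixes a d a' d' t :: int
  assumes "m dvd a*t+d" "m dvd a'*t+d'"
  shows "m dvd (a' div gcd a a')*d - (a div gcd a a')*d'"
proof -
  define h where "h = gcd a a'"
  define x where "x = a' div h"
  define y where "y = a div h"
  have "a = y * h" unfolding y_def h_def by simp
  moreover have "a' = x * h" unfolding x_def h_def by simp
  ultimately have xy: "x * a = y * a'" by (simp add: algebra_simps)
  have "m dvd x*(a*t+d) - y*(a'*t+d')" using assms by (simp add: dvd_diff)
  also have "x*(a*t+d) - y*(a'*t+d') = x*d - y*d'" using xy by (simp add: algebra_simps)
  finally show ?thesis unfolding x_def y_def h_def .
qed

definition singleton :: "nat \<Rightarrow> nat \<Rightarrow> nat \<Rightarrow> bool" where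
  "singleton n t i = (\<forall>j<38. j \<noteq> i \<longrightarrow> ex t j mod n \<noteq> ex t i mod n)"

fun inner :: "int \<Rightarrow> int \<Rightarrow> int \<Rightarrow> nat \<Rightarrow> int \<Rightarrow> int \<Rightarrow> (nat \<times> int \<times> nat \<times> nat) \<Rightarrow> bool" where
"inner N a d w1 aw dw (j1,c1,A1,D1) = (j1 = w1 \<or>
   (((int A1 - aw) div gcd a (int A1 - aw)) * d - (a div gcd a (int A1 - aw)) * (int D1 - dw) \<noteq> 0 \<and>
    \<bar>((int A1 - aw) div gcd a (int A1 - aw)) * d - (a div gcd a (int A1 - aw)) * (int D1 - dw)\<bar> < N))"
fun outer2 :: "int \<Rightarrow> int \<Rightarrow> int \<Rightarrow> nat \<Rightarrow> bool" where
"outer2 N a d w1 = (if a = 0 then d \<noteq> 0 \<and> \<bar>d\<bar> < N else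
    w1 < 38 \<and> list_all (inner N a d w1 (int (Ae w1)) (int (De w1))) LLi)"
fun outer :: "int \<Rightarrow> nat \<Rightarrow> int \<Rightarrow> int \<Rightarrow> nat list \<Rightarrow> (nat \<times> int \<times> nat \<times> nat) \<Rightarrow> bool" where
"outer N w0 aw dw plan (j0,c0,A0,D0) = (j0 = w0 \<or> outer2 N (int A0 - aw) (int D0 - dw) (plan ! j0))"
definition chk_big :: "int \<Rightarrow> nat \<Rightarrow> nat list \<Rightarrow> bool" where
"chk_big N w0 plan = list_all (outer N w0 (int (Ae w0)) (int (De w0)) plan) LLi"

lemma outer2_zero: assumes "outer2 N 0 d w" shows "d \<noteq> 0 \<and> \<bar>d\<bar> < N"
proof -
  have "outer2 N 0 d w = (d \<noteq> 0 \<and> \<bar>d\<bar> < N)" by (simp only: outer2.simps if_True simp_thms)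
  then show ?thesis using assms by blast
qed
lemma outer2_nz: assumes "a \<noteq> 0" "outer2 N a d w" shows "w < 38 \<and> list_all (inner N a d w (int (Ae w)) (int (De w))) LLi"
proof -
  have "outer2 N a d w = (w < 38 \<and> list_all (inner N a d w (int (Ae w)) (int (De w))) LLi)"
    using assms(1) by (simp only: outer2.simps if_False)
  then show ?thesis using assms by blast
qed

lemma small_dvd: "int n dvd c \<Longrightarrow> c \<noteq> 0 \<Longrightarrow> \<bar>c\<bar> < N \<Longrightarrow> N \<le> int n \<Longrightarrow> False"
proof -
  assume a: "int n dvd c" "c \<noteq> 0" "\<bar>c\<bar> < N" "N \<le> int n"
  have "\<bar>int n\<bar> \<le> \<bar>c\<bar>" by (rule dvd_imp_le_int) (use a in auto)
  then show False using a by simp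
qed

lemma big_sound:
  assumes chk: "chk_big N w0 plan" and w0: "w0 < 38" and nN: "N \<le> int n"
  shows "\<exists>i<38. singleton n t i"
proof (rule ccontr)
  assume "\<not> (\<exists>i<38. singleton n t i)"
  then have ns: "\<And>i. i < 38 \<Longrightarrow> \<exists>j<38. j \<noteq> i \<and> ex t j mod n = ex t i mod n"
    unfolding singleton_def by blast
  obtain j0 where j0: "j0 < 38" "j0 \<noteq> w0" "ex t j0 mod n = ex t w0 mod n" using ns[OF w0] by blast
  define a where "a = int (Ae j0) - int (Ae w0)"
  define d where "d = int (De j0) - int (De w0)"
  have dv0: "int n dvd a * int t + d" using j0(3) resid unfolding a_def d_def by blast
  have "outer N w0 (int (Ae w0)) (int (De w0)) plan (j0, cf j0, Ae j0, De j0)"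
    using chk mem_LLi[OF j0(1)] unfolding chk_big_def list_all_iff by blast
  then have C: "outer2 N a d (plan ! j0)"
    using j0(2) unfolding a_def d_def by simp
  show False
  proof (cases "a = 0")
    case True
    then have "d \<noteq> 0 \<and> \<bar>d\<bar> < N" using C outer2_zero by blast
    then have "d \<noteq> 0" "\<bar>d\<bar> < N" by blast+
    moreover have "int n dvd d" using dv0 True by simp
    ultimately show False using small_dvd nN by blast
  next
    case False
    define w1 where "w1 = plan ! j0"
    have w1: "w1 < 38" and L: "list_all (inner N a d w1 (int (Ae w1)) (int (De w1))) LLi"
      using outer2_nz[OF False C] unfolding w1_def by blast+
    obtain j1 where j1: "j1 < 38" "j1 \<noteq> w1" "ex t j1 mod n = ex t w1 mod n" using ns[OF w1] by blast
    define a' where "a' = int (Ae j1) - int (Ae w1)"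
    define d' where "d' = int (De j1) - int (De w1)"
    have dv1: "int n dvd a' * int t + d'" using j1(3) resid unfolding a'_def d'_def by blast
    define c where "c = (a' div gcd a a') * d - (a div gcd a a') * d'"
    have "inner N a d w1 (int (Ae w1)) (int (De w1)) (j1, cf j1, Ae j1, De j1)"
      using L mem_LLi[OF j1(1)] unfolding list_all_iff by blast
    then have "c \<noteq> 0 \<and> \<bar>c\<bar> < N"
      using j1(2) unfolding c_def a'_def d'_def by (simp only: inner.simps) simp
    moreover have "int n dvd c" unfolding c_def by (rule lin_comb[OF dv0 dv1])
    ultimately show False using small_dvd nN by blast
  qed
qed

lemma chk_big_ok: "chk_big 26 14 [3, 12, 0, 1, 3, 4, 17, 16, 15, 18, 0, 0, 0, 0, 0, 0, 0, 0, 0, 0, 0, 0, 0, 0, 0, 0, 0, 0, 0, 4, 12, 1, 1, 2, 0, 17, 16, 17]"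
  by code_simp



fun sterm :: "nat \<Rightarrow> nat \<Rightarrow> nat \<Rightarrow> nat \<Rightarrow> (nat \<times> int \<times> nat \<times> nat) \<Rightarrow> int" where
"sterm n ss i r (j,c,aa,dd) = (if j \<noteq> i \<and> (aa * ss + dd) mod n = r then \<bar>c\<bar> else 0)"

definition dchk :: "nat \<Rightarrow> nat \<Rightarrow> nat \<Rightarrow> bool" where
"dchk n s i = (i < 38 \<and> \<bar>cf i\<bar> > sum_list (map (sterm n s i (ex s i mod n)) LLi))"

fun chk_row :: "nat \<Rightarrow> nat \<Rightarrow> nat list \<Rightarrow> bool" where
"chk_row n s [] = True" |
"chk_row n s (w#ws) = ((dchk n s w \<or> (n = 13 \<and> (s = 6 \<or> s = 12))) \<and> chk_row n (Suc s) ws)"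

fun chk_small :: "nat \<Rightarrow> nat list list \<Rightarrow> bool" where
"chk_small n [] = True" |
"chk_small n (r#rs) = (length r = n \<and> chk_row n 0 r \<and> chk_small (Suc n) rs)"

definition tab :: "nat list list" where "tab = [[7,11,7,16,1,18,0,18,5,0,8,9,0], [18,18,18,15,11,9,17,18,18,18,15,11,9,17], [18,1,3,10,1,16,9,6,2,18,16,7,0,4,7], [9,0,4,7,8,0,4,7,9,0,4,7,8,0,4,7], [7,2,18,7,6,1,1,9,5,0,1,3,18,9,0,4,7], [7,1,1,5,5,0,0,4,7,7,1,1,5,5,0,0,4,7], [3,0,1,3,16,8,1,1,9,1,9,2,18,7,6,0,0,4,1], [7,0,0,4,7,7,0,0,4,7,7,0,0,4,7,7,0,0,4,7], [7,18,2,10,7,6,10,1,1,9,5,9,0,1,3,13,8,0,0,4,7], [7,5,1,1,5,5,18,0,0,4,1,7,5,1,1,5,5,18,0,0,4,1], [3,5,0,1,3,2,0,6,1,1,9,5,9,14,2,9,0,6,9,0,0,4,1], [0,4,0,0,4,1,3,4,0,0,4,1,0,4,0,0,4,1,3,4,0,0,4,1], [3,4,3,2,9,0,2,0,6,1,1,9,1,4,7,0,1,3,0,8,15,0,0,4,1]]"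

lemma chk_small_ok: "chk_small 13 tab"
  by code_simp

lemma chk_row_sound: "chk_row n s0 ws \<Longrightarrow> s0 \<le> s \<Longrightarrow> s < s0 + length ws \<Longrightarrow>
   dchk n s (ws ! (s - s0)) \<or> (n = 13 \<and> (s = 6 \<or> s = 12))"
proof (induction ws arbitrary: s0)
  case Nil then show ?case by simp
next
  case (Cons w ws)
  show ?case
  proof (cases "s = s0")
    case True then show ?thesis using Cons.prems by simp
  next
    case False
    then have "Suc s0 \<le> s" using Cons.prems by simp
    moreover have "s - s0 = Suc (s - Suc s0)" using \<open>Suc s0 \<le> s\<close> by simp
    ultimately show ?thesis using Cons.IH[of "Suc s0"] Cons.prems by simp
  qed
qed

lemma chk_small_sound: "chk_small n0 rs \<Longrightarrow> n0 \<le> n \<Longrightarrow> n < n0 + length rs \<Longrightarrow> s < n \<Longrightarrow>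
   \<exists>w. dchk n s w \<or> (n = 13 \<and> (s = 6 \<or> s = 12))"
proof (induction rs arbitrary: n0)
  case Nil then show ?case by simp
next
  case (Cons r rs)
  show ?case
  proof (cases "n = n0")
    case True
    then have "chk_row n 0 r" "length r = n" using Cons.prems by auto
    then show ?thesis using chk_row_sound[of n 0 r s] Cons.prems by auto
  next
    case False
    then show ?thesis using Cons.IH[of "Suc n0"] Cons.prems by simp
  qed
qed

lemma sterm_eq: "sterm n s i r (j, p) = (if j \<noteq> i \<and> (fst (snd p) * s + snd (snd p)) mod n = r then \<bar>fst p\<bar> else 0)"
  by (cases p) auto

lemma sum_list_LLi: "sum_list (map (sterm n s i r) LLi) = (\<Sum>j\<in>{j. j<38 \<and> j \<noteq> i \<and> ex s j mod n = r}. \<bar>cf j\<bar>)"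
proof -
  have "sum_list (map (sterm n s i r) LLi) = sum_list (map (\<lambda>j. sterm n s i r (j, LL!j)) [0..<38])"
    unfolding LLi_map by (simp add: comp_def)
  also have "\<dots> = (\<Sum>j\<in>{0..<38}. sterm n s i r (j, LL!j))"
    by (simp add: sum_set_upt_conv_sum_list_nat[symmetric])
  also have "\<dots> = (\<Sum>j\<in>{0..<38}. if j \<noteq> i \<and> ex s j mod n = r then \<bar>cf j\<bar> else 0)"
    by (intro sum.cong refl) (simp add: cf_def ex_def Ae_def De_def sterm_eq del: sterm.simps)
  also have "\<dots> = (\<Sum>j\<in>{j. j<38 \<and> j \<noteq> i \<and> ex s j mod n = r}. \<bar>cf j\<bar>)"
    by (subst sum.inter_filter[symmetric]) (auto intro: sum.cong)
  finally show ?thesis .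
qed

lemma ex_mod: "ex t j mod n = ex (t mod n) j mod n"
  unfolding ex_def by (metis mod_add_left_eq mod_mult_right_eq)

lemma cf_nz_list: "list_all (\<lambda>i. cf i \<noteq> 0) [0..<38]" by code_simp
lemma cf_nz: "i < 38 \<Longrightarrow> cf i \<noteq> 0" using cf_nz_list by (simp add: list_all_iff)

lemma spec6: "list_all (\<lambda>k. (ex 6 k mod 13 = ex 6 22 mod 13) = (k = 22 \<or> k = 13)) [0..<38]" by code_simp
lemma spec12: "list_all (\<lambda>k. (ex 12 k mod 13 = ex 12 23 mod 13) = (k = 23 \<or> k = 14)) [0..<38]" by code_simp
lemma spec_data: "Ae 22 = Ae 13 \<and> De 13 = De 22 + 13 \<and> \<bar>cf 22\<bar> = 1 \<and> \<bar>cf 13\<bar> = 1 \<and>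
   Ae 23 = Ae 14 \<and> De 14 = De 23 + 13 \<and> \<bar>cf 23\<bar> = 1 \<and> \<bar>cf 14\<bar> = 1" by code_simp

lemma prime13: "prime (13::nat)" by code_simp



lemma dom_contra:
  assumes b1: "b \<ge> 1" and dv: "cyclotomic b dvd T_poly t" and nd: "n = b div rad b"
    and n0: "n > 0" and i: "i < 38"
    and dm: "\<bar>cf i\<bar> > (\<Sum>j\<in>{j. j<38 \<and> j \<noteq> i \<and> ex t j mod n = ex t i mod n}. \<bar>cf j\<bar>)"
  shows False
proof -
  define r where "r = ex t i mod n"
  define z where "z = cis(2*pi/real b)"
  define f where "f j = of_int (cf j) * z ^ ex t j" for j
  define C where "C = {j. j<38 \<and> ex t j mod n = r}"
  have rn: "r < n" unfolding r_def using n0 by simp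
  have Z: "(\<Sum>j\<in>C. f j) = 0" using class_zero[OF b1 dv nd rn] unfolding C_def f_def z_def .
  have iC: "i \<in> C" using i unfolding C_def r_def by simp
  have fin: "finite C" unfolding C_def by simp
  have C': "C - {i} = {j. j<38 \<and> j \<noteq> i \<and> ex t j mod n = ex t i mod n}" unfolding C_def r_def by auto
  have "(\<Sum>j\<in>C. f j) = f i + (\<Sum>j\<in>C - {i}. f j)" using sum.remove[OF fin iC] .
  then have fi: "f i = - (\<Sum>j\<in>C - {i}. f j)" using Z by (simp add: add_eq_0_iff)
  have nf: "norm (f j) = real_of_int \<bar>cf j\<bar>" for j
    unfolding f_def z_def by (simp add: norm_mult norm_power)
  have "real_of_int \<bar>cf i\<bar> = norm (\<Sum>j\<in>C - {i}. f j)" using fi nf[of i] by simp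
  also have "\<dots> \<le> (\<Sum>j\<in>C - {i}. norm (f j))" by (rule norm_sum)
  also have "\<dots> = real_of_int (\<Sum>j\<in>C - {i}. \<bar>cf j\<bar>)" by (simp add: nf)
  finally have "\<bar>cf i\<bar> \<le> (\<Sum>j\<in>C - {i}. \<bar>cf j\<bar>)" by linarith
  then show False using dm C' by simp
qed

lemma special13:
  assumes b1: "b \<ge> 1" and dv: "cyclotomic b dvd T_poly t" and nd: "b div rad b = 13"
    and i: "i < 38" and j: "j < 38" "i \<noteq> j" and AA: "Ae i = Ae j" and DD: "De j = De i + 13"
    and ci: "\<bar>cf i\<bar> = 1" and cj: "\<bar>cf j\<bar> = 1"
    and cls: "{k. k<38 \<and> ex t k mod 13 = ex t i mod 13} = {i,j}"
  shows False
proof -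
  define z where "z = cis(2*pi/real b)"
  have "(\<Sum>k\<in>{k. k<38 \<and> ex t k mod 13 = ex t i mod 13}. of_int (cf k) * z ^ ex t k) = 0"
    using class_zero[OF b1 dv nd[symmetric], of "ex t i mod 13"] unfolding z_def by simp
  then have "of_int (cf i) * z ^ ex t i + of_int (cf j) * z ^ ex t j = 0" unfolding cls using j by simp
  moreover have "ex t j = ex t i + 13" unfolding ex_def using AA DD by simp
  ultimately have "z ^ ex t i * (of_int (cf i) + of_int (cf j) * z ^ 13) = 0"
    by (simp add: power_add algebra_simps)
  then have e: "of_int (cf j) * z ^ 13 = - of_int (cf i)" unfolding z_def by (simp add: add_eq_0_iff)
  have sq: "(of_int c :: complex) ^ 2 = 1" if "\<bar>c\<bar> = 1" for c
  proof -
    have "c ^ 2 = 1" using that by (metis abs_power2 power2_abs power_one abs_eq_iff one_power2 power2_minus)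
    then show ?thesis by (metis of_int_power of_int_1)
  qed
  have "(of_int (cf j) * z ^ 13) ^ 2 = (- of_int (cf i) :: complex) ^ 2" using e by simp
  then have "z ^ 26 = 1" using sq[OF ci] sq[OF cj] by (simp add: power_mult_distrib power_mult[symmetric])
  moreover have "z ^ 26 = cis (2*pi*real 26/real b)" unfolding z_def by (simp add: Complex.DeMoivre field_simps)
  ultimately have "b dvd 26" using cis_eq1_dvd[of b 26] b1 by simp
  moreover have bn: "b = 13 * rad b" using rad_dvd[OF b1] nd by (metis dvd_mult_div_cancel mult.commute)
  then have "13 dvd b" by (metis dvd_triv_left)
  then have "13 dvd rad b" using prime_dvd_rad[OF b1 prime13] by simp
  then have "169 dvd b" using bn by auto
  ultimately have "169 dvd (26::nat)" by (rule dvd_trans[rotated])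
  then show False by simp
qed

theorem mainTheorem9:
  fixes t b :: nat
  assumes "b \<ge> 1"
    and "cyclotomic b dvd T_poly t"
  shows "real b / real (rad b) < 13"
proof (rule ccontr)
  assume H: "\<not> real b / real (rad b) < 13"
  define n where "n = b div rad b"
  have rb: "rad b > 0" using rad_pos assms(1) by simp
  have bn: "b = n * rad b" using rad_dvd[OF assms(1)] unfolding n_def by simp
  have "real b = real n * real (rad b)" using bn by (metis of_nat_mult)
  then have "real b / real (rad b) = real n" using rb by (simp add: field_simps)
  then have n13: "n \<ge> 13" using H by simp
  show False
  proof (cases "n \<ge> 26")
    case True
    have "\<exists>i<38. singleton n t i"
      by (rule big_sound[OF chk_big_ok]) (use True in auto)
    then obtain i where i: "i < 38" "singleton n t i" by blast
    have E: "{j. j<38 \<and> j \<noteq> i \<and> ex t j mod n = ex t i mod n} = {}"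
      using i(2) unfolding singleton_def by auto
    have "\<bar>cf i\<bar> > (\<Sum>j\<in>{j. j<38 \<and> j \<noteq> i \<and> ex t j mod n = ex t i mod n}. \<bar>cf j\<bar>)"
      unfolding E using cf_nz[OF i(1)] by simp
    then show False using dom_contra[OF assms n_def _ i(1)] True by simp
  next
    case False
    define s where "s = t mod n"
    have sn: "s < n" unfolding s_def using n13 by simp
    obtain w where w: "dchk n s w \<or> (n = 13 \<and> (s = 6 \<or> s = 12))"
      using chk_small_sound[OF chk_small_ok, of n s] n13 False sn by (auto simp: tab_def)
    have exs: "ex t k mod n = ex s k mod n" for k unfolding s_def by (rule ex_mod)
    show False
    proof (cases "dchk n s w")
      case True
      then have w38: "w < 38" and dm: "\<bar>cf w\<bar> > (\<Sum>j\<in>{j. j<38 \<and> j \<noteq> w \<and> ex s j mod n = ex s w mod n}. \<bar>cf j\<bar>)"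
        unfolding dchk_def sum_list_LLi by auto
      have "{j. j<38 \<and> j \<noteq> w \<and> ex s j mod n = ex s w mod n} = {j. j<38 \<and> j \<noteq> w \<and> ex t j mod n = ex t w mod n}"
        using exs by auto
      then show False using dom_contra[OF assms n_def _ w38] dm n13 by simp
    next
      case False
      then have n: "n = 13" and s: "s = 6 \<or> s = 12" using w by auto
      have nd: "b div rad b = 13" using n n_def by simp
      show False
      proof (cases "s = 6")
        case True
        have "{k. k<38 \<and> ex t k mod 13 = ex t 22 mod 13} = {22, 13}"
          using spec6 exs True n by (auto simp: list_all_iff)
        then show False using special13[OF assms nd, of 22 13] spec_data by simp
      next
        case False
        then have s12: "s = 12" using s by simp
        have "{k. k<38 \<and> ex t k mod 13 = ex t 23 mod 13} = {23, 14}"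
          using spec12 exs s12 n by (auto simp: list_all_iff)
        then show False using special13[OF assms nd, of 23 14] spec_data by simp
      qed
    qed
  qed
qed


end
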